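(* Let $f:\mathbb{R}^n_{>0}\to\mathbb{R}^n_{>0}$ be order-preserving and homogeneous, and let $J\subseteq[n]$. The following are equivalent: (a) there is no nonempty $A\subseteq J$ such that $[n]\setminus A$ is invariant in $\mathcal{H}^-_0(f)$; (b) $\operatorname{reach}([n]\setminus J,\mathcal{H}^-_0(f))=[n]$; (c) $r(f^J_0)=0$. Similarly, the following are equivalent: (d) there is no nonempty $B\subseteq[n]\setminus J$ such that $[n]\setminus B$ is invariant in $\mathcal{H}^+_\infty(f)$; (e) $\operatorname{reach}(J,\mathcal{H}^+_\infty(f))=[n]$; (f) $\lambda(f^{[n]\setminus J}_\infty)=\infty$.
   Context: $[n]=\{1,\dots,n\}$; entrywise order. Order-preserving: $x\le y\Rightarrow f(x)\le f(y)$; homogeneous: $f(tx)=tf(x)$ for $t>0$. $f$ extends continuously to order-preserving homogeneous maps on $\mathbb{R}^n_{\ge0}$ and $(0,\infty]^n$, again denoted $f$. $P^J_\alpha(x)_j=x_j$ for $j\in J$, $\alpha$ otherwise; $f^J_0=P^J_0fP^J_0$, $f^J_\infty=P^J_\infty fP^J_\infty$; $r(g)=\inf_{x\in\mathbb{R}^n_{>0}}\max_ig(x)_i/x_i$, $\lambda(g)=\sup_{x\in\mathbb{R}^n_{>0}}\min_ig(x)_i/x_i$. For $I\subseteq[n]$, $e_I$ is the indicator vector of $I$, $\exp$ is entrywise. $\mathcal{H}^-_0(f)$ and $\mathcal{H}^+_\infty(f)$ are directed hypergraphs on nodes $[n]$ whose hyperarcs are the pairs $(I,\{j\})$ with $I\subseteq[n]$,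 $j\notin I$, and respectively $\lim_{t\to\infty}f(\exp(-te_I))_j=0$, resp. $\lim_{t\to\infty}f(\exp(te_I))_j=\infty$. A set $I\subseteq[n]$ is invariant in a hypergraph if there is no hyperarc $(I',\{j\})$ with $I'\subseteq I$ and $j\notin I$. $\operatorname{reach}(J,\mathcal{H})$ is the smallest invariant set containing $J$. *)

theory Defs
  imports "HOL-Analysis.Analysis"
begin

text \<open>Vectors in R^n are modelled as real^'n for a finite index type 'n; [n] is UNIV.\<close>

definition pos_vec :: "real^'n \<Rightarrow> bool" where
  "pos_vec x \<longleftrightarrow> (\<forall>i. 0 < x $ i)"

definition nonneg_vec :: "real^'n \<Rightarrow> bool" where
  "nonneg_vec x \<longleftrightarrow> (\<forall>i. 0 \<le> x $ i)"

definition order_preserving_pos :: "(real^'n \<Rightarrow> real^'n) \<Rightarrow> bool" where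
  "order_preserving_pos f \<longleftrightarrow>
     (\<forall>x y. pos_vec x \<and> pos_vec y \<and> (\<forall>i. x $ i \<le> y $ i) \<longrightarrow> (\<forall>i. f x $ i \<le> f y $ i))"

definition homogeneous_pos :: "(real^'n \<Rightarrow> real^'n) \<Rightarrow> bool" where
  "homogeneous_pos f \<longleftrightarrow> (\<forall>x t. pos_vec x \<and> 0 < t \<longrightarrow> f (t *\<^sub>R x) = t *\<^sub>R f x)"

text \<open>Continuous extension to the closed cone R^n_{>=0}:
  f(x) = lim_{eps -> 0+} f(x + eps 1) = inf_{eps>0} f(x + eps 1) (monotone in eps).\<close>
definition ext0 :: "(real^'n \<Rightarrow> real^'n) \<Rightarrow> real^'n \<Rightarrow> real^'n" where
  "ext0 f x = (\<chi> i. INF e\<in>{0<..}. f (x + e *\<^sub>R (\<chi> j. 1)) $ i)"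

definition trunc_vec :: "('n \<Rightarrow> ereal) \<Rightarrow> real \<Rightarrow> real^'n" where
  "trunc_vec y t = (\<chi> j. if y j = \<infinity> then t else min (real_of_ereal (y j)) t)"

text \<open>Continuous extension to (0,\<infinity>]^n: f(y) = lim_{t -> \<infinity>} f(min(y, t 1)) = sup_t (monotone in t).\<close>
definition ext_inf :: "(real^'n \<Rightarrow> real^'n) \<Rightarrow> ('n \<Rightarrow> ereal) \<Rightarrow> ('n \<Rightarrow> ereal)" where
  "ext_inf f y = (\<lambda>i. SUP t\<in>{0<..}. ereal (f (trunc_vec y t) $ i))"

definition P0 :: "'n set \<Rightarrow> real^'n \<Rightarrow> real^'n" where
  "P0 J x = (\<chi> j. if j \<in> J then x $ j else 0)"

definition Pinf :: "'n set \<Rightarrow> ('n \<Rightarrow> ereal) \<Rightarrow> ('n \<Rightarrow> ereal)" where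
  "Pinf J y = (\<lambda>j. if j \<in> J then y j else \<infinity>)"

definition f0 :: "'n set \<Rightarrow> (real^'n \<Rightarrow> real^'n) \<Rightarrow> real^'n \<Rightarrow> real^'n" where
  "f0 J f x = P0 J (ext0 f (P0 J x))"

definition finf :: "'n set \<Rightarrow> (real^'n \<Rightarrow> real^'n) \<Rightarrow> real^'n \<Rightarrow> ('n \<Rightarrow> ereal)" where
  "finf J f x = Pinf J (ext_inf f (Pinf J (\<lambda>j. ereal (x $ j))))"

definition upper_cw :: "(real^'n::finite \<Rightarrow> real^'n) \<Rightarrow> real" where
  "upper_cw g = (INF x\<in>{x. pos_vec x}. MAX i\<in>UNIV. g x $ i / x $ i)"

definition lower_cw :: "(real^'n::finite \<Rightarrow> ('n \<Rightarrow> ereal)) \<Rightarrow> ereal" where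
  "lower_cw g = (SUP x\<in>{x. pos_vec x}. MIN i\<in>UNIV. g x i / ereal (x $ i))"

text \<open>Hyperarcs (I,{j}) of H^-_0(f) and H^+_\<infinity>(f).\<close>
definition arc0 :: "(real^'n \<Rightarrow> real^'n) \<Rightarrow> 'n set \<Rightarrow> 'n \<Rightarrow> bool" where
  "arc0 f I j \<longleftrightarrow> j \<notin> I \<and>
     ((\<lambda>t. f (\<chi> k. exp (- t * indicator I k)) $ j) \<longlongrightarrow> 0) at_top"

definition arc_inf :: "(real^'n \<Rightarrow> real^'n) \<Rightarrow> 'n set \<Rightarrow> 'n \<Rightarrow> bool" where
  "arc_inf f I j \<longleftrightarrow> j \<notin> I \<and>
     filterlim (\<lambda>t. f (\<chi> k. exp (t * indicator I k)) $ j) at_top at_top"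

definition invariant_hg :: "('n set \<Rightarrow> 'n \<Rightarrow> bool) \<Rightarrow> 'n set \<Rightarrow> bool" where
  "invariant_hg H I \<longleftrightarrow> \<not> (\<exists>I' j. H I' j \<and> I' \<subseteq> I \<and> j \<notin> I)"

definition reach_hg :: "'n set \<Rightarrow> ('n set \<Rightarrow> 'n \<Rightarrow> bool) \<Rightarrow> 'n set" where
  "reach_hg J H = \<Inter> {I. J \<subseteq> I \<and> invariant_hg H I}"

end

theory Submission
  imports Defs
begin


lemma reach_inv: "invariant_hg H (reach_hg K H)"
  unfolding invariant_hg_def reach_hg_def by blast

lemma reach_sup: "K \<subseteq> reach_hg K H"
  unfolding reach_hg_def by blast

lemma reach_le: "K \<subseteq> S \<Longrightarrow> invariant_hg H S \<Longrightarrow> reach_hg K H \<subseteq> S"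
  unfolding reach_hg_def by (rule Inter_lower) simp

lemma reach_univ_iff:
  "reach_hg K H = UNIV \<longleftrightarrow> (\<forall>S. K \<subseteq> S \<longrightarrow> invariant_hg H S \<longrightarrow> S = UNIV)"
proof
  assume R: "reach_hg K H = UNIV"
  show "\<forall>S. K \<subseteq> S \<longrightarrow> invariant_hg H S \<longrightarrow> S = UNIV"
  proof (intro allI impI)
    fix S assume "K \<subseteq> S" "invariant_hg H S"
    from reach_le[OF this] R have "UNIV \<subseteq> S" by simp
    then show "S = UNIV" by blast
  qed
next
  assume "\<forall>S. K \<subseteq> S \<longrightarrow> invariant_hg H S \<longrightarrow> S = UNIV"
  then show "reach_hg K H = UNIV" using reach_inv[of H K] reach_sup[of K H] by simp
qed

lemma comb:
  "(\<not> (\<exists>A. A \<noteq> {} \<and> A \<subseteq> J \<and> invariant_hg H (UNIV - A))) \<longleftrightarrow> reach_hg (UNIV - J) H = UNIV"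
  unfolding reach_univ_iff
proof
  assume H: "\<not> (\<exists>A. A \<noteq> {} \<and> A \<subseteq> J \<and> invariant_hg H (UNIV - A))"
  show "\<forall>S. UNIV - J \<subseteq> S \<longrightarrow> invariant_hg H S \<longrightarrow> S = UNIV"
  proof (intro allI impI)
    fix S assume S: "UNIV - J \<subseteq> S" "invariant_hg H S"
    have e: "UNIV - (UNIV - S) = S" by blast
    show "S = UNIV"
    proof (rule ccontr)
      assume "S \<noteq> UNIV"
      then have a1: "UNIV - S \<noteq> {}" by blast
      have a2: "UNIV - S \<subseteq> J" using S(1) by blast
      have a3: "invariant_hg H (UNIV - (UNIV - S))" using S(2) e by simp
      show False
        by (rule notE[OF H], rule exI[of _ "UNIV - S"], intro conjI a1 a2 a3)
    qed
  qed
next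
  assume "\<forall>S. UNIV - J \<subseteq> S \<longrightarrow> invariant_hg H S \<longrightarrow> S = UNIV"
  then have R: "\<And>S. UNIV - J \<subseteq> S \<Longrightarrow> invariant_hg H S \<Longrightarrow> S = UNIV" by blast
  show "\<not> (\<exists>A. A \<noteq> {} \<and> A \<subseteq> J \<and> invariant_hg H (UNIV - A))"
  proof
    assume "\<exists>A. A \<noteq> {} \<and> A \<subseteq> J \<and> invariant_hg H (UNIV - A)"
    then obtain A where A: "A \<noteq> {}" "A \<subseteq> J" "invariant_hg H (UNIV - A)" by blast
    have "UNIV - J \<subseteq> UNIV - A" using A(2) by blast
    from R[OF this A(3)] have "A = {}" by blast
    with A(1) show False by simp
  qed
qed

locale opf =
  fixes f :: "real^'n \<Rightarrow> real^'n"
  assumes fpos: "\<And>x. pos_vec x \<Longrightarrow> pos_vec (f x)"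
    and fop: "order_preserving_pos f"
    and fhom: "homogeneous_pos f"
begin

lemma mono: "pos_vec x \<Longrightarrow> pos_vec y \<Longrightarrow> (\<And>k. x$k \<le> y$k) \<Longrightarrow> f x $ i \<le> f y $ i"
  using fop unfolding order_preserving_pos_def by blast

lemma hom: "pos_vec x \<Longrightarrow> 0 < t \<Longrightarrow> f (t *\<^sub>R x) = t *\<^sub>R f x"
  using fhom unfolding homogeneous_pos_def by blast

lemma fposi: "pos_vec x \<Longrightarrow> 0 < f x $ i"
  using fpos unfolding pos_vec_def by blast

lemma pos_shift: "nonneg_vec y \<Longrightarrow> 0 < e \<Longrightarrow> pos_vec (y + e *\<^sub>R (\<chi> j. 1))"
  unfolding pos_vec_def nonneg_vec_def by (simp add: add_nonneg_pos)

lemma ext0_eq: "ext0 f y $ i = (INF e\<in>{0<..}. f (y + e *\<^sub>R (\<chi> j. 1)) $ i)"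
  by (simp add: ext0_def)

lemma ext0_le: "nonneg_vec y \<Longrightarrow> 0 < e \<Longrightarrow> ext0 f y $ i \<le> f (y + e *\<^sub>R (\<chi> j. 1)) $ i"
  unfolding ext0_eq
  by (rule cINF_lower) (auto intro!: bdd_belowI2[where m=0] less_imp_le fposi pos_shift)

lemma ext0_ge: "(\<And>e. 0 < e \<Longrightarrow> c \<le> f (y + e *\<^sub>R (\<chi> j. 1)) $ i) \<Longrightarrow> c \<le> ext0 f y $ i"
  unfolding ext0_eq by (rule cINF_greatest) auto

lemma ext0_nonneg: "nonneg_vec y \<Longrightarrow> 0 \<le> ext0 f y $ i"
  by (rule ext0_ge) (auto intro!: less_imp_le fposi pos_shift)

lemma ext0_mono: "nonneg_vec y \<Longrightarrow> (\<And>k. y$k \<le> y'$k) \<Longrightarrow> ext0 f y $ i \<le> ext0 f y' $ i"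
proof (rule ext0_ge)
  fix e :: real assume y: "nonneg_vec y" and le: "\<And>k. y$k \<le> y'$k" and e: "0 < e"
  have y': "nonneg_vec y'" using y le unfolding nonneg_vec_def by (meson order_trans)
  have "ext0 f y $ i \<le> f (y + e *\<^sub>R (\<chi> j. 1)) $ i" by (rule ext0_le[OF y e])
  also have "\<dots> \<le> f (y' + e *\<^sub>R (\<chi> j. 1)) $ i"
    by (rule mono) (use y y' e le in \<open>auto intro: pos_shift\<close>)
  finally show "ext0 f y $ i \<le> f (y' + e *\<^sub>R (\<chi> j. 1)) $ i" .
qed

lemma P0_nonneg: "pos_vec x \<Longrightarrow> nonneg_vec (P0 J x)"
  unfolding pos_vec_def nonneg_vec_def P0_def by (simp add: less_imp_le)

lemma f0_eq: "f0 J f x $ i = (if i \<in> J then ext0 f (P0 J x) $ i else 0)"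
  by (simp add: f0_def P0_def)

lemma f0_nonneg: "pos_vec x \<Longrightarrow> 0 \<le> f0 J f x $ i"
  using ext0_nonneg[OF P0_nonneg] by (simp add: f0_eq)

lemma M_nonneg: "pos_vec x \<Longrightarrow> 0 \<le> (MAX i\<in>UNIV. f0 J f x $ i / x $ i)"
proof -
  assume x: "pos_vec x"
  have "0 \<le> f0 J f x $ i / x $ i" for i
    using f0_nonneg[OF x, of J i] x by (simp add: pos_vec_def less_imp_le)
  then show ?thesis by (subst Max_ge_iff) auto
qed

lemma upper_cw_le: "pos_vec x \<Longrightarrow> upper_cw (f0 J f) \<le> (MAX i\<in>UNIV. f0 J f x $ i / x $ i)"
proof -
  assume x: "pos_vec x"
  have bdd: "bdd_below ((\<lambda>x. MAX i\<in>UNIV. f0 J f x $ i / x $ i) ` {x. pos_vec x})"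
    by (rule bdd_belowI2[where m=0]) (simp add: M_nonneg)
  have "x \<in> {x. pos_vec x}" using x by simp
  from cINF_lower[OF bdd this] show ?thesis unfolding upper_cw_def .
qed

lemma ones_pos: "pos_vec ((\<chi> j. 1) :: real^'n)"
  by (simp add: pos_vec_def)

lemma upper_cw_ge: "(\<And>x. pos_vec x \<Longrightarrow> c \<le> (MAX i\<in>UNIV. f0 J f x $ i / x $ i)) \<Longrightarrow> c \<le> upper_cw (f0 J f)"
  unfolding upper_cw_def by (rule cINF_greatest) (auto intro: ones_pos)

end



context opf begin

lemma c_fwd:
  assumes R: "\<And>S. UNIV - J \<subseteq> S \<Longrightarrow> invariant_hg (arc0 f) S \<Longrightarrow> S = UNIV"
  shows "upper_cw (f0 J f) = 0"
proof -
  define Q where "Q x i = ext0 f (P0 J x) $ i" for x i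
  have Qmono: "Q x i \<le> Q y i" if "pos_vec x" "\<And>k. x$k \<le> y$k" for x y i
    unfolding Q_def
    by (rule ext0_mono[OF P0_nonneg[OF that(1)]]) (use that(2) in \<open>simp add: P0_def\<close>)
  define P where "P S \<longleftrightarrow> (\<forall>\<epsilon>>0. \<forall>\<delta>>0. \<exists>x. pos_vec x \<and> (\<forall>i. i \<notin> S \<longrightarrow> x$i = 1/2)
      \<and> (\<forall>i\<in>S. x$i \<le> \<delta>) \<and> (\<forall>i\<in>S\<inter>J. Q x i \<le> \<epsilon> * x$i))" for S
  have base: "P (UNIV - J)"
    unfolding P_def
  proof (intro allI impI)
    fix \<epsilon> \<delta> :: real assume "\<epsilon> > 0" "\<delta> > 0"
    let ?x = "(\<chi> i. if i \<in> J then 1/2 else min \<delta> (1/2)) :: real^'n"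
    show "\<exists>x. pos_vec x \<and> (\<forall>i. i \<notin> UNIV - J \<longrightarrow> x$i = 1/2)
      \<and> (\<forall>i\<in>UNIV - J. x$i \<le> \<delta>) \<and> (\<forall>i\<in>(UNIV - J)\<inter>J. Q x i \<le> \<epsilon> * x$i)"
      by (rule exI[of _ ?x]) (use \<open>\<delta> > 0\<close> in \<open>auto simp: pos_vec_def\<close>)
  qed
  have step: "P (insert j S)" if PS: "P S" and arc: "arc0 f I j" and IS: "I \<subseteq> S" and jS: "j \<notin> S" for S I j
    unfolding P_def
  proof (intro allI impI)
    fix \<epsilon> \<delta> :: real assume \<epsilon>: "\<epsilon> > 0" and \<delta>: "\<delta> > 0"
    define d where "d = min \<delta> (1/2)"
    have d: "0 < d" "d \<le> \<delta>" "d \<le> 1/2" using \<delta> by (auto simp: d_def)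
    define z where "z t = ((\<chi> k. exp (- t * indicator I k)) :: real^'n)" for t
    have zpos: "pos_vec (z t)" for t by (simp add: z_def pos_vec_def)
    from arc have lim: "((\<lambda>t. f (z t) $ j) \<longlongrightarrow> 0) at_top" by (simp add: arc0_def z_def)
    have "0 < \<epsilon> * d" using \<epsilon> d by simp
    from order_tendstoD(2)[OF lim this]
    obtain N where N: "\<And>t. t \<ge> N \<Longrightarrow> f (z t) $ j < \<epsilon> * d"
      by (auto simp: eventually_at_top_linorder)
    define t where "t = max N 0"
    define \<eta> where "\<eta> = exp (-t)"
    have \<eta>: "0 < \<eta>" "\<eta> \<le> 1" by (auto simp: \<eta>_def t_def)
    have fz: "f (z t) $ j < \<epsilon> * d" by (rule N) (simp add: t_def)
    define \<delta>' where "\<delta>' = min \<delta> (\<eta>/2)"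
    have \<delta>': "0 < \<delta>'" "\<delta>' \<le> \<delta>" "\<delta>' \<le> \<eta>/2" using \<delta> \<eta> by (auto simp: \<delta>'_def)
    obtain x where x: "pos_vec x" "\<And>i. i \<notin> S \<Longrightarrow> x$i = 1/2" "\<And>i. i\<in>S \<Longrightarrow> x$i \<le> \<delta>'"
       "\<And>i. i \<in> S \<inter> J \<Longrightarrow> Q x i \<le> \<epsilon> * x$i"
      using PS[unfolded P_def, rule_format, of \<epsilon> \<delta>'] \<epsilon> \<delta>' by blast
    define x' where "x' = ((\<chi> i. if i = j then d else x$i) :: real^'n)"
    have x'pos: "pos_vec x'" using x(1) d by (simp add: x'_def pos_vec_def)
    have x'le: "x'$k \<le> x$k" for k using x(2)[OF jS] d by (simp add: x'_def)
    have x'S: "x'$k = x$k" if "k \<in> S" for k using that jS by (auto simp: x'_def)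
    have Qj: "Q x' j \<le> \<epsilon> * x'$j"
    proof -
      have nn: "nonneg_vec (P0 J x')" by (rule P0_nonneg[OF x'pos])
      have "Q x' j \<le> f (P0 J x' + (\<eta>/2) *\<^sub>R (\<chi> k. 1)) $ j"
        unfolding Q_def by (rule ext0_le[OF nn]) (use \<eta> in simp)
      also have "\<dots> \<le> f (z t) $ j"
      proof (rule mono)
        show "pos_vec (P0 J x' + (\<eta>/2) *\<^sub>R (\<chi> k. 1))" by (rule pos_shift[OF nn]) (use \<eta> in simp)
        show "pos_vec (z t)" by (rule zpos)
        fix k
        have P0le: "P0 J x' $ k \<le> x' $ k" using x'pos by (auto simp: P0_def pos_vec_def less_imp_le)
        show "(P0 J x' + (\<eta>/2) *\<^sub>R (\<chi> k. 1)) $ k \<le> z t $ k"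
        proof (cases "k \<in> I")
          case True
          then have "k \<in> S" using IS by blast
          then have "x'$k \<le> \<eta>/2" using x(3) x'S \<delta>' by fastforce
          then show ?thesis using True P0le by (simp add: z_def \<eta>_def)
        next
          case False
          have "x'$k \<le> 1/2"
          proof (cases "k \<in> S")
            case True then show ?thesis using x(3) x'S \<delta>' \<eta> by fastforce
          next
            case False then show ?thesis using x(2) d by (auto simp: x'_def)
          qed
          then show ?thesis using False P0le \<eta> by (simp add: z_def)
        qed
      qed
      also have "\<dots> < \<epsilon> * d" by (rule fz)
      finally show ?thesis by (simp add: x'_def)
    qed
    show "\<exists>x. pos_vec x \<and> (\<forall>i. i \<notin> insert j S \<longrightarrow> x$i = 1/2)
      \<and> (\<forall>i\<in>insert j S. x$i \<le> \<delta>) \<and> (\<forall>i\<in>insert j S \<inter> J. Q x i \<le> \<epsilon> * x$i)"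
    proof (intro exI[of _ x'] conjI ballI allI impI)
      show "pos_vec x'" by (rule x'pos)
    next
      fix i assume "i \<notin> insert j S" then show "x'$i = 1/2" using x(2) by (auto simp: x'_def)
    next
      fix i assume "i \<in> insert j S" then show "x'$i \<le> \<delta>"
        using x(3) \<delta>' d by (auto simp: x'_def intro: order_trans)
    next
      fix i assume i: "i \<in> insert j S \<inter> J"
      show "Q x' i \<le> \<epsilon> * x'$i"
      proof (cases "i = j")
        case True then show ?thesis using Qj by simp
      next
        case False
        then have "i \<in> S \<inter> J" using i by blast
        then have "Q x' i \<le> Q x i" "Q x i \<le> \<epsilon> * x$i" "x'$i = x$i"
          using Qmono[OF x'pos x'le] x(4) x'S by auto
        then show ?thesis by simp
      qed
    qed
  qed
  have fin: "finite {S. UNIV - J \<subseteq> S \<and> P S}" by (rule finite_subset[OF subset_UNIV]) simp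
  have ne: "{S. UNIV - J \<subseteq> S \<and> P S} \<noteq> {}" using base by blast
  obtain S where S: "UNIV - J \<subseteq> S" "P S"
    and mx: "\<And>S'. UNIV - J \<subseteq> S' \<Longrightarrow> P S' \<Longrightarrow> S \<subseteq> S' \<Longrightarrow> S = S'"
    using finite_has_maximal[OF fin ne] by auto
  have "S = UNIV"
  proof (rule ccontr)
    assume "S \<noteq> UNIV"
    then have "\<not> invariant_hg (arc0 f) S" using R S(1) by blast
    then obtain I j where Ij: "arc0 f I j" "I \<subseteq> S" "j \<notin> S" unfolding invariant_hg_def by blast
    have "P (insert j S)" by (rule step[OF S(2) Ij])
    then have "S = insert j S" using mx S(1) by blast
    with Ij(3) show False by blast
  qed
  with S have PU: "P UNIV" by simp
  have le: "upper_cw (f0 J f) \<le> \<epsilon>" if \<epsilon>: "\<epsilon> > 0" for \<epsilon>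
  proof -
    obtain x where x: "pos_vec x" "\<And>i. i \<in> J \<Longrightarrow> Q x i \<le> \<epsilon> * x$i"
      using PU[unfolded P_def, rule_format, of \<epsilon> 1] \<epsilon> by auto
    have "f0 J f x $ i / x $ i \<le> \<epsilon>" for i
    proof (cases "i \<in> J")
      case True
      have xi: "0 < x$i" using x(1) by (simp add: pos_vec_def)
      from True x(2)[OF True] show ?thesis
        by (simp add: f0_eq Q_def pos_divide_le_eq[OF xi] mult.commute)
    next
      case False then show ?thesis using \<epsilon> by (simp add: f0_eq)
    qed
    then have Mle: "(MAX i\<in>UNIV. f0 J f x $ i / x $ i) \<le> \<epsilon>" by (subst Max_le_iff) auto
    show ?thesis using upper_cw_le[OF x(1), of J] Mle by linarith
  qed
  have ge: "0 \<le> upper_cw (f0 J f)" by (rule upper_cw_ge) (rule M_nonneg)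
  show ?thesis
  proof (rule ccontr)
    assume "upper_cw (f0 J f) \<noteq> 0"
    with ge have "upper_cw (f0 J f) > 0" by simp
    with le[of "upper_cw (f0 J f) / 2"] show False by simp
  qed
qed

end



context opf begin

lemma c_bwd:
  assumes SK: "UNIV - J \<subseteq> S" and Sinv: "invariant_hg (arc0 f) S" and SU: "S \<noteq> UNIV"
  shows "upper_cw (f0 J f) > 0"
proof -
  define A where "A = UNIV - S"
  have A: "A \<noteq> {}" "A \<subseteq> J" "finite A" using SK SU by (auto simp: A_def)
  define z where "z t = ((\<chi> k. exp (- t * indicator S k)) :: real^'n)" for t
  have zpos: "pos_vec (z t)" for t by (simp add: z_def pos_vec_def)
  have zanti: "f (z t') $ a \<le> f (z t) $ a" if "t \<le> t'" for t t' a
    by (rule mono[OF zpos zpos]) (use that in \<open>simp add: z_def indicator_def\<close>)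
  have cex: "\<exists>c>0. \<forall>t. c \<le> f (z t) $ a" if a: "a \<in> A" for a
  proof (rule ccontr)
    assume "\<not> (\<exists>c>0. \<forall>t. c \<le> f (z t) $ a)"
    then have H: "\<exists>t. f (z t) $ a < c" if "c > 0" for c using that by (force simp: not_le)
    have "((\<lambda>t. f (z t) $ a) \<longlongrightarrow> 0) at_top"
    proof (rule order_tendstoI)
      fix y :: real assume "y < 0"
      then show "eventually (\<lambda>t. y < f (z t) $ a) at_top"
        using fposi[OF zpos] by (intro always_eventually allI) (meson less_trans)
    next
      fix y :: real assume "0 < y"
      then obtain t0 where t0: "f (z t0) $ a < y" using H by blast
      show "eventually (\<lambda>t. f (z t) $ a < y) at_top"
        unfolding eventually_at_top_linorder
        using zanti t0 by (meson le_less_trans)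
    qed
    then have "arc0 f S a" using a by (simp add: arc0_def A_def z_def)
    with Sinv a show False unfolding invariant_hg_def A_def by blast
  qed
  then have "\<forall>a\<in>A. \<exists>c. c > 0 \<and> (\<forall>t. c \<le> f (z t) $ a)" by blast
  then obtain cf where cf: "\<And>a. a \<in> A \<Longrightarrow> cf a > 0 \<and> (\<forall>t. cf a \<le> f (z t) $ a)"
    by metis
  define c where "c = Min (cf ` A)"
  have c: "0 < c" using A cf Min_in[of "cf ` A"] by (auto simp: c_def)
  have cle: "c \<le> cf a" if "a \<in> A" for a using A that by (auto simp: c_def)
  have lb: "c \<le> (MAX i\<in>UNIV. f0 J f x $ i / x $ i)" if x: "pos_vec x" for x
  proof -
    have "Min ((\<lambda>b. x$b) ` A) \<in> (\<lambda>b. x$b) ` A" using A by (intro Min_in) auto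
    then obtain a where a: "a \<in> A" "x$a = Min ((\<lambda>b. x$b) ` A)" by auto
    have amin: "x$a \<le> x$b" if "b \<in> A" for b using a A that by auto
    define m where "m = x$a"
    have m: "0 < m" using x by (simp add: m_def pos_vec_def)
    have aJ: "a \<in> J" using a A by blast
    have "m * cf a \<le> ext0 f (P0 J x) $ a"
    proof (rule ext0_ge)
      fix e :: real assume e: "0 < e"
      define t where "t = ln ((m+e)/e)"
      have et: "exp (-t) = e/(m+e)" using m e by (simp add: t_def exp_minus)
      have "m * exp (-t) \<le> e" using m e by (simp add: et field_simps)
      have "f (m *\<^sub>R z t) $ a \<le> f (P0 J x + e *\<^sub>R (\<chi> j. 1)) $ a"
      proof (rule mono)
        show "pos_vec (m *\<^sub>R z t)" using m zpos by (simp add: pos_vec_def)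
        show "pos_vec (P0 J x + e *\<^sub>R (\<chi> j. 1))" by (rule pos_shift[OF P0_nonneg[OF x] e])
        fix k
        have P0nn: "0 \<le> P0 J x $ k" using P0_nonneg[OF x] by (simp add: nonneg_vec_def)
        show "(m *\<^sub>R z t) $ k \<le> (P0 J x + e *\<^sub>R (\<chi> j. 1)) $ k"
        proof (cases "k \<in> S")
          case True
          then show ?thesis using \<open>m * exp (-t) \<le> e\<close> P0nn by (simp add: z_def)
        next
          case False
          then have "k \<in> A" "k \<in> J" using A by (auto simp: A_def)
          then show ?thesis using False amin[of k] e by (simp add: z_def P0_def m_def)
        qed
      qed
      moreover have "f (m *\<^sub>R z t) $ a = m * f (z t) $ a" using hom[OF zpos m] by simp
      moreover have "cf a \<le> f (z t) $ a" using cf a by blast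
      ultimately show "m * cf a \<le> f (P0 J x + e *\<^sub>R (\<chi> j. 1)) $ a"
        using m by (smt (verit) mult_left_mono)
    qed
    then have "cf a \<le> f0 J f x $ a / x $ a"
      using aJ m by (simp add: f0_eq m_def pos_le_divide_eq mult.commute)
    then have "c \<le> f0 J f x $ a / x $ a" using cle[OF a(1)] by linarith
    then show ?thesis by (subst Max_ge_iff) auto
  qed
  have "c \<le> upper_cw (f0 J f)" by (rule upper_cw_ge) (rule lb)
  with c show ?thesis by linarith
qed

end



context opf begin

lemma trunc_Pinf: "trunc_vec (Pinf L (\<lambda>j. ereal (x$j))) T $ k = (if k \<in> L then min (x$k) T else T)"
  by (simp add: trunc_vec_def Pinf_def)

lemma trunc_pos: "pos_vec x \<Longrightarrow> 0 < T \<Longrightarrow> pos_vec (trunc_vec (Pinf L (\<lambda>j. ereal (x$j))) T)"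
  by (simp add: trunc_Pinf pos_vec_def)

lemma extinf_ge: "pos_vec x \<Longrightarrow> 0 < T \<Longrightarrow>
   ereal (f (trunc_vec (Pinf L (\<lambda>j. ereal (x$j))) T) $ i) \<le> ext_inf f (Pinf L (\<lambda>j. ereal (x$j))) i"
  unfolding ext_inf_def by (rule SUP_upper) simp

lemma extinf_le: "(\<And>T. 0 < T \<Longrightarrow> f (trunc_vec y T) $ i \<le> c) \<Longrightarrow> ext_inf f y i \<le> ereal c"
  unfolding ext_inf_def by (rule SUP_least) auto

lemma extinf_mono: "pos_vec x \<Longrightarrow> (\<And>k. x$k \<le> x'$k) \<Longrightarrow>
   ext_inf f (Pinf L (\<lambda>j. ereal (x$j))) i \<le> ext_inf f (Pinf L (\<lambda>j. ereal (x'$j))) i"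
  unfolding ext_inf_def
proof (rule SUP_mono)
  fix T :: real assume x: "pos_vec x" and le: "\<And>k. x$k \<le> x'$k" and T: "T \<in> {0<..}"
  have x': "pos_vec x'" using x le unfolding pos_vec_def by (meson less_le_trans)
  have "f (trunc_vec (Pinf L (\<lambda>j. ereal (x$j))) T) $ i \<le> f (trunc_vec (Pinf L (\<lambda>j. ereal (x'$j))) T) $ i"
    by (rule mono) (use x x' T le in \<open>auto simp: trunc_Pinf min_le_iff_disj intro: trunc_pos\<close>)
  then show "\<exists>m\<in>{0<..}. ereal (f (trunc_vec (Pinf L (\<lambda>j. ereal (x$j))) T) $ i)
      \<le> ereal (f (trunc_vec (Pinf L (\<lambda>j. ereal (x'$j))) m) $ i)" using T by (intro bexI[of _ T]) auto
qed

lemma finf_eq: "finf L f x i = (if i \<in> L then ext_inf f (Pinf L (\<lambda>j. ereal (x$j))) i else \<infinity>)"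
  by (simp add: finf_def Pinf_def)

lemma lower_cw_ge: "pos_vec x \<Longrightarrow> (MIN i\<in>UNIV. g x i / ereal (x $ i)) \<le> lower_cw g"
  unfolding lower_cw_def by (rule SUP_upper) simp

lemma lower_cw_le: "(\<And>x. pos_vec x \<Longrightarrow> (MIN i\<in>UNIV. g x i / ereal (x $ i)) \<le> c) \<Longrightarrow> lower_cw g \<le> c"
  unfolding lower_cw_def by (rule SUP_least) simp

end



context opf begin

lemma f_fwd:
  assumes R: "\<And>S. J \<subseteq> S \<Longrightarrow> invariant_hg (arc_inf f) S \<Longrightarrow> S = UNIV"
  shows "lower_cw (finf (UNIV - J) f) = \<infinity>"
proof -
  define L where "L = UNIV - J"
  define Q where "Q x i = ext_inf f (Pinf L (\<lambda>j. ereal (x$j))) i" for x i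
  have Qmono: "Q x i \<le> Q y i" if "pos_vec x" "\<And>k. x$k \<le> y$k" for x y i
    unfolding Q_def by (rule extinf_mono[OF that])
  define P where "P S \<longleftrightarrow> (\<forall>C>0. \<forall>D>0. \<exists>x. pos_vec x \<and> (\<forall>i. i \<notin> S \<longrightarrow> x$i = 2)
      \<and> (\<forall>i\<in>S. D \<le> x$i) \<and> (\<forall>i\<in>S\<inter>L. ereal (C * x$i) \<le> Q x i))" for S
  have base: "P J"
    unfolding P_def
  proof (intro allI impI)
    fix C D :: real assume "C > 0" "D > 0"
    let ?x = "(\<chi> i. if i \<in> J then max D 2 else 2) :: real^'n"
    show "\<exists>x. pos_vec x \<and> (\<forall>i. i \<notin> J \<longrightarrow> x$i = 2)
      \<and> (\<forall>i\<in>J. D \<le> x$i) \<and> (\<forall>i\<in>J\<inter>L. ereal (C * x$i) \<le> Q x i)"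
      by (rule exI[of _ ?x]) (auto simp: pos_vec_def L_def)
  qed
  have step: "P (insert j S)" if PS: "P S" and arc: "arc_inf f I j" and IS: "I \<subseteq> S" and jS: "j \<notin> S"
    and JS: "J \<subseteq> S" for S I j
    unfolding P_def
  proof (intro allI impI)
    fix C D :: real assume C: "C > 0" and D: "D > 0"
    define d where "d = max D 2"
    have d: "D \<le> d" "2 \<le> d" by (auto simp: d_def)
    define w where "w t = ((\<chi> k. exp (t * indicator I k)) :: real^'n)" for t
    have wpos: "pos_vec (w t)" for t by (simp add: w_def pos_vec_def)
    from arc have lim: "filterlim (\<lambda>t. f (w t) $ j) at_top at_top" by (simp add: arc_inf_def w_def)
    then have "eventually (\<lambda>t. C * d + 1 \<le> f (w t) $ j) at_top" by (simp add: filterlim_at_top)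
    then obtain N where N: "\<And>t. t \<ge> N \<Longrightarrow> C * d + 1 \<le> f (w t) $ j"
      by (auto simp: eventually_at_top_linorder)
    define t where "t = max N 0"
    define \<eta> where "\<eta> = exp t"
    have \<eta>: "1 \<le> \<eta>" by (auto simp: \<eta>_def t_def)
    have fw: "C * d + 1 \<le> f (w t) $ j" by (rule N) (simp add: t_def)
    define D' where "D' = max D \<eta>"
    have D': "0 < D'" "D \<le> D'" "\<eta> \<le> D'" using D \<eta> by (auto simp: D'_def)
    obtain x where x: "pos_vec x" "\<And>i. i \<notin> S \<Longrightarrow> x$i = 2" "\<And>i. i\<in>S \<Longrightarrow> D' \<le> x$i"
       "\<And>i. i \<in> S \<inter> L \<Longrightarrow> ereal (C * x$i) \<le> Q x i"
      using PS[unfolded P_def, rule_format, of C D'] C D' by blast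
    define x' where "x' = ((\<chi> i. if i = j then d else x$i) :: real^'n)"
    have x'pos: "pos_vec x'" using x(1) d by (simp add: x'_def pos_vec_def)
    have x'ge: "x$k \<le> x'$k" for k using x(2)[OF jS] d by (simp add: x'_def)
    have x'S: "x'$k = x$k" if "k \<in> S" for k using that jS by (auto simp: x'_def)
    have jL: "j \<in> L" using jS JS by (auto simp: L_def)
    have Qj: "ereal (C * x'$j) \<le> Q x' j"
    proof -
      have "f (w t) $ j \<le> f (trunc_vec (Pinf L (\<lambda>k. ereal (x'$k))) \<eta>) $ j"
      proof (rule mono)
        show "pos_vec (w t)" by (rule wpos)
        show "pos_vec (trunc_vec (Pinf L (\<lambda>k. ereal (x'$k))) \<eta>)"
          by (rule trunc_pos[OF x'pos]) (use \<eta> in simp)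
        fix k
        show "w t $ k \<le> trunc_vec (Pinf L (\<lambda>k. ereal (x'$k))) \<eta> $ k"
        proof (cases "k \<in> I")
          case True
          then have "k \<in> S" using IS by blast
          then have "\<eta> \<le> x'$k" using x(3) x'S D' by fastforce
          then show ?thesis using True by (simp add: w_def \<eta>_def trunc_Pinf)
        next
          case False
          have "1 \<le> x'$k"
          proof (cases "k \<in> S")
            case True then show ?thesis using x(3) x'S D' \<eta> by fastforce
          next
            case False then show ?thesis using x(2) d by (auto simp: x'_def)
          qed
          then show ?thesis using False \<eta> by (simp add: w_def trunc_Pinf)
        qed
      qed
      then have e1: "ereal (f (w t) $ j) \<le> ereal (f (trunc_vec (Pinf L (\<lambda>k. ereal (x'$k))) \<eta>) $ j)"
        by simp
      have e2: "ereal (f (trunc_vec (Pinf L (\<lambda>k. ereal (x'$k))) \<eta>) $ j) \<le> Q x' j"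
        unfolding Q_def by (rule extinf_ge[OF x'pos]) (use \<eta> in simp)
      from e1 e2 have "ereal (f (w t) $ j) \<le> Q x' j" by (rule order_trans)
      moreover have "C * x'$j \<le> f (w t) $ j" using fw by (simp add: x'_def)
      ultimately show ?thesis by (metis ereal_less_eq(3) order_trans)
    qed
    show "\<exists>x. pos_vec x \<and> (\<forall>i. i \<notin> insert j S \<longrightarrow> x$i = 2)
      \<and> (\<forall>i\<in>insert j S. D \<le> x$i) \<and> (\<forall>i\<in>insert j S \<inter> L. ereal (C * x$i) \<le> Q x i)"
    proof (intro exI[of _ x'] conjI ballI allI impI)
      show "pos_vec x'" by (rule x'pos)
    next
      fix i assume "i \<notin> insert j S" then show "x'$i = 2" using x(2) by (auto simp: x'_def)
    next
      fix i assume i: "i \<in> insert j S" show "D \<le> x'$i"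
      proof (cases "i = j")
        case True then show ?thesis using d by (simp add: x'_def)
      next
        case False then have "i \<in> S" using i by blast
        then show ?thesis using x(3) x'S D' by fastforce
      qed
    next
      fix i assume i: "i \<in> insert j S \<inter> L"
      show "ereal (C * x'$i) \<le> Q x' i"
      proof (cases "i = j")
        case True then show ?thesis using Qj by simp
      next
        case False
        then have "i \<in> S \<inter> L" using i by blast
        then have "Q x i \<le> Q x' i" "ereal (C * x$i) \<le> Q x i" "x'$i = x$i"
          using Qmono[OF x(1) x'ge] x(4) x'S by auto
        then show ?thesis by simp
      qed
    qed
  qed
  have fin: "finite {S. J \<subseteq> S \<and> P S}" by (rule finite_subset[OF subset_UNIV]) simp
  have ne: "{S. J \<subseteq> S \<and> P S} \<noteq> {}" using base by blast
  obtain S where S: "J \<subseteq> S" "P S"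
    and mx: "\<And>S'. J \<subseteq> S' \<Longrightarrow> P S' \<Longrightarrow> S \<subseteq> S' \<Longrightarrow> S = S'"
    using finite_has_maximal[OF fin ne] by auto
  have "S = UNIV"
  proof (rule ccontr)
    assume "S \<noteq> UNIV"
    then have "\<not> invariant_hg (arc_inf f) S" using R S(1) by blast
    then obtain I j where Ij: "arc_inf f I j" "I \<subseteq> S" "j \<notin> S" unfolding invariant_hg_def by blast
    have "P (insert j S)" by (rule step[OF S(2) Ij S(1)])
    then have "S = insert j S" using mx S(1) by blast
    with Ij(3) show False by blast
  qed
  with S have PU: "P UNIV" by simp
  have ge: "ereal C \<le> lower_cw (finf L f)" if C: "C > 0" for C
  proof -
    obtain x where x: "pos_vec x" "\<And>i. i \<in> L \<Longrightarrow> ereal (C * x$i) \<le> Q x i"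
      using PU[unfolded P_def, rule_format, of C 1] C by auto
    have "ereal C \<le> finf L f x i / ereal (x $ i)" for i
    proof -
      have xi: "0 < x$i" using x(1) by (simp add: pos_vec_def)
      show ?thesis
      proof (cases "i \<in> L")
        case True
        have "ereal (x$i) * ereal C \<le> Q x i" using x(2)[OF True] by (simp add: mult.commute)
        then show ?thesis using True xi by (simp add: finf_eq Q_def ereal_le_divide_pos)
      next
        case False then show ?thesis using xi by (simp add: finf_eq)
      qed
    qed
    then have "ereal C \<le> (MIN i\<in>UNIV. finf L f x i / ereal (x $ i))" by (subst Min_ge_iff) auto
    also have "\<dots> \<le> lower_cw (finf L f)" by (rule lower_cw_ge[OF x(1)])
    finally show ?thesis .
  qed
  have "lower_cw (finf L f) = \<infinity>"
  proof (rule ereal_top)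
    fix B :: real
    have "ereal B \<le> ereal (max B 1)" by simp
    also have "\<dots> \<le> lower_cw (finf L f)" by (rule ge) simp
    finally show "ereal B \<le> lower_cw (finf L f)" .
  qed
  then show ?thesis by (simp add: L_def)
qed

lemma f_bwd:
  assumes SK: "J \<subseteq> S" and Sinv: "invariant_hg (arc_inf f) S" and SU: "S \<noteq> UNIV"
  shows "lower_cw (finf (UNIV - J) f) \<noteq> \<infinity>"
proof -
  define L where "L = UNIV - J"
  define B where "B = UNIV - S"
  have B: "B \<noteq> {}" "B \<subseteq> L" "finite B" using SK SU by (auto simp: B_def L_def)
  define w where "w t = ((\<chi> k. exp (t * indicator S k)) :: real^'n)" for t
  have wpos: "pos_vec (w t)" for t by (simp add: w_def pos_vec_def)
  have wmono: "f (w t) $ b \<le> f (w t') $ b" if "t \<le> t'" for t t' b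
    by (rule mono[OF wpos wpos]) (use that in \<open>simp add: w_def indicator_def\<close>)
  have cex: "\<exists>c. \<forall>t. f (w t) $ b \<le> c" if b: "b \<in> B" for b
  proof (rule ccontr)
    assume "\<not> (\<exists>c. \<forall>t. f (w t) $ b \<le> c)"
    then have H: "\<exists>t. c < f (w t) $ b" for c by (force simp: not_le)
    have "filterlim (\<lambda>t. f (w t) $ b) at_top at_top"
      unfolding filterlim_at_top
    proof
      fix Z :: real
      obtain t0 where t0: "Z < f (w t0) $ b" using H by blast
      show "eventually (\<lambda>t. Z \<le> f (w t) $ b) at_top"
        unfolding eventually_at_top_linorder
        using wmono t0 by (meson less_le_trans less_imp_le)
    qed
    then have "arc_inf f S b" using b by (simp add: arc_inf_def B_def w_def)
    with Sinv b show False unfolding invariant_hg_def B_def by blast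
  qed
  then have "\<forall>b\<in>B. \<exists>c. \<forall>t. f (w t) $ b \<le> c" by blast
  then obtain cf where cf: "\<And>b t. b \<in> B \<Longrightarrow> f (w t) $ b \<le> cf b" by metis
  define c where "c = Max (cf ` B)"
  have cle: "cf b \<le> c" if "b \<in> B" for b using B that by (auto simp: c_def)
  have ub: "(MIN i\<in>UNIV. finf L f x i / ereal (x $ i)) \<le> ereal c" if x: "pos_vec x" for x
  proof -
    have "Max ((\<lambda>b. x$b) ` B) \<in> (\<lambda>b. x$b) ` B" using B by (intro Max_in) auto
    then obtain b where b: "b \<in> B" "x$b = Max ((\<lambda>b. x$b) ` B)" by auto
    have bmax: "x$k \<le> x$b" if "k \<in> B" for k using b B that by auto
    define m where "m = x$b"
    have m: "0 < m" using x by (simp add: m_def pos_vec_def)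
    have bL: "b \<in> L" using b B by blast
    have "ext_inf f (Pinf L (\<lambda>j. ereal (x$j))) b \<le> ereal (m * cf b)"
    proof (rule extinf_le)
      fix T :: real assume T: "0 < T"
      define t where "t = ln ((T+m)/m)"
      have et: "exp t = (T+m)/m" using m T by (simp add: t_def)
      have met: "m * exp t = T + m" using m by (simp add: et)
      have "f (trunc_vec (Pinf L (\<lambda>j. ereal (x$j))) T) $ b \<le> f (m *\<^sub>R w t) $ b"
      proof (rule mono)
        show "pos_vec (m *\<^sub>R w t)" using m wpos by (simp add: pos_vec_def)
        show "pos_vec (trunc_vec (Pinf L (\<lambda>j. ereal (x$j))) T)" by (rule trunc_pos[OF x T])
        fix k
        show "trunc_vec (Pinf L (\<lambda>j. ereal (x$j))) T $ k \<le> (m *\<^sub>R w t) $ k"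
        proof (cases "k \<in> S")
          case True
          have "trunc_vec (Pinf L (\<lambda>j. ereal (x$j))) T $ k \<le> T" by (simp add: trunc_Pinf)
          then show ?thesis using True met m by (simp add: w_def)
        next
          case False
          then have "k \<in> B" "k \<in> L" using B by (auto simp: B_def)
          then show ?thesis using False bmax[of k] by (simp add: w_def trunc_Pinf m_def min.coboundedI1)
        qed
      qed
      moreover have "f (m *\<^sub>R w t) $ b = m * f (w t) $ b" using hom[OF wpos m] by simp
      moreover have "f (w t) $ b \<le> cf b" using cf b by blast
      ultimately show "f (trunc_vec (Pinf L (\<lambda>j. ereal (x$j))) T) $ b \<le> m * cf b"
        using m by (smt (verit) mult_left_mono)
    qed
    then have "finf L f x b / ereal (x $ b) \<le> ereal (cf b)"
      using bL m by (simp add: finf_eq m_def ereal_divide_le_pos mult.commute)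
    also have "\<dots> \<le> ereal c" using cle[OF b(1)] by simp
    finally have "finf L f x b / ereal (x $ b) \<le> ereal c" .
    moreover have "(MIN i\<in>UNIV. finf L f x i / ereal (x $ i)) \<le> finf L f x b / ereal (x $ b)"
      by (rule Min_le) auto
    ultimately show ?thesis by (rule order_trans[rotated])
  qed
  have "lower_cw (finf L f) \<le> ereal c" by (rule lower_cw_le) (rule ub)
  then show ?thesis by (auto simp: L_def)
qed

end


theorem lemma3p9:
  fixes f :: "real^'n \<Rightarrow> real^'n" and J :: "'n set"
  assumes "\<And>x. pos_vec x \<Longrightarrow> pos_vec (f x)"
    and "order_preserving_pos f"
    and "homogeneous_pos f"
  shows "((\<not> (\<exists>A. A \<noteq> {} \<and> A \<subseteq> J \<and> invariant_hg (arc0 f) (UNIV - A)))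
            \<longleftrightarrow> reach_hg (UNIV - J) (arc0 f) = UNIV)
       \<and> (reach_hg (UNIV - J) (arc0 f) = UNIV \<longleftrightarrow> upper_cw (f0 J f) = 0)
       \<and> ((\<not> (\<exists>B. B \<noteq> {} \<and> B \<subseteq> UNIV - J \<and> invariant_hg (arc_inf f) (UNIV - B)))
            \<longleftrightarrow> reach_hg J (arc_inf f) = UNIV)
       \<and> (reach_hg J (arc_inf f) = UNIV \<longleftrightarrow> lower_cw (finf (UNIV - J) f) = \<infinity>)"
proof -
  interpret opf f using assms by unfold_locales
  have c: "reach_hg (UNIV - J) (arc0 f) = UNIV \<longleftrightarrow> upper_cw (f0 J f) = 0"
  proof
    assume "reach_hg (UNIV - J) (arc0 f) = UNIV"
    then have R: "\<forall>S. UNIV - J \<subseteq> S \<longrightarrow> invariant_hg (arc0 f) S \<longrightarrow> S = UNIV"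
      by (simp only: reach_univ_iff)
    show "upper_cw (f0 J f) = 0" by (rule c_fwd) (use R in blast)
  next
    assume u: "upper_cw (f0 J f) = 0"
    show "reach_hg (UNIV - J) (arc0 f) = UNIV"
    proof (rule ccontr)
      assume "reach_hg (UNIV - J) (arc0 f) \<noteq> UNIV"
      then have "upper_cw (f0 J f) > 0" by (rule c_bwd[OF reach_sup reach_inv])
      with u show False by simp
    qed
  qed
  have fi: "reach_hg J (arc_inf f) = UNIV \<longleftrightarrow> lower_cw (finf (UNIV - J) f) = \<infinity>"
  proof
    assume "reach_hg J (arc_inf f) = UNIV"
    then have R: "\<forall>S. J \<subseteq> S \<longrightarrow> invariant_hg (arc_inf f) S \<longrightarrow> S = UNIV"
      by (simp only: reach_univ_iff)
    show "lower_cw (finf (UNIV - J) f) = \<infinity>" by (rule f_fwd) (use R in blast)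
  next
    assume u: "lower_cw (finf (UNIV - J) f) = \<infinity>"
    show "reach_hg J (arc_inf f) = UNIV"
    proof (rule ccontr)
      assume "reach_hg J (arc_inf f) \<noteq> UNIV"
      then have "lower_cw (finf (UNIV - J) f) \<noteq> \<infinity>" by (rule f_bwd[OF reach_sup reach_inv])
      with u show False by simp
    qed
  qed
  have e: "UNIV - (UNIV - J) = J" by blast
  have a: "(\<not> (\<exists>A. A \<noteq> {} \<and> A \<subseteq> J \<and> invariant_hg (arc0 f) (UNIV - A)))
            \<longleftrightarrow> reach_hg (UNIV - J) (arc0 f) = UNIV" by (rule comb)
  have d: "(\<not> (\<exists>B. B \<noteq> {} \<and> B \<subseteq> UNIV - J \<and> invariant_hg (arc_inf f) (UNIV - B)))
            \<longleftrightarrow> reach_hg J (arc_inf f) = UNIV"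
    using comb[of "UNIV - J" "arc_inf f"] unfolding e .
  from a c d fi show ?thesis by (intro conjI)
qed

end
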